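(* For all integers $0\le s\le r$, $$\sum_{\rho=s}^{r}\mathcal G^r_\rho\,a^{(2\rho)}_s=(2r)!\binom rs,\qquad \sum_{\rho=s}^{r}\mathcal G^r_\rho\,a^{(2\rho+1)}_s=(2r+1)!\binom rs .$$
   Context: The integers $\mathcal G^r_\rho$ ($0\le\rho\le r$) are defined by $\mathcal G^0_0=1$, $\mathcal G^r_{-1}=\mathcal G^r_{r+1}=0$, and $\mathcal G^r_\rho=(2r-1)^2\mathcal G^{r-1}_\rho+\mathcal G^{r-1}_{\rho-1}$ for $r\ge1$. Stern's coefficients $a^{(n)}_k$ are the unique numbers such that, for all integers $\rho\ge0$ and real $x$, $\frac{d^{2\rho}}{dx^{2\rho}}\operatorname{sech}x=(-1)^\rho\operatorname{sech}x\sum_{k=0}^{\rho}(-1)^k a^{(2\rho)}_k\tanh^{2k}x$ and $\frac{d^{2\rho+1}}{dx^{2\rho+1}}\operatorname{sech}x=(-1)^{\rho+1}\operatorname{sech}x\,\tanh x\sum_{k=0}^{\rho}(-1)^k a^{(2\rho+1)}_k\tanh^{2k}x$. *)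

theory Defs
  imports "HOL-Analysis.Analysis"
begin

fun G :: "nat \<Rightarrow> nat \<Rightarrow> int" where
  "G 0 \<rho> = (if \<rho> = 0 then 1 else 0)"
| "G (Suc r) \<rho> = (2 * int r + 1)^2 * G r \<rho> + (if \<rho> = 0 then 0 else G r (\<rho> - 1))"

definition sech :: "real \<Rightarrow> real" where
  "sech x = 1 / cosh x"

definition stern :: "nat \<Rightarrow> nat \<Rightarrow> real" where
  "stern n = (THE a. (\<forall>k > n div 2. a k = 0) \<and>
     (\<forall>x::real. ((deriv :: (real \<Rightarrow> real) \<Rightarrow> real \<Rightarrow> real) ^^ n) sech x =
        (if even n
         then (-1)^(n div 2) * sech x * (\<Sum>k\<le>n div 2. (-1)^k * a k * tanh x ^ (2*k))
         else (-1)^(n div 2 + 1) * sech x * tanh x * (\<Sum>k\<le>n div 2. (-1)^k * a k * tanh x ^ (2*k)))))"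

end

theory Submission
  imports Defs "HOL-Computational_Algebra.Polynomial"
begin

definition L :: "real poly \<Rightarrow> real poly" where
  "L p = pderiv p - pCons 0 p - pCons 0 (pCons 0 (pderiv p))"

definition P :: "nat \<Rightarrow> real poly" where
  "P n = (L ^^ n) 1"

lemma P_Suc: "P (Suc n) = L (P n)" by (simp add: P_def)

lemma poly_L: "poly (L p) t = - t * poly p t + (1 - t^2) * poly (pderiv p) t"
  by (simp add: L_def power2_eq_square algebra_simps)

lemma coeff_L: "coeff (L p) i =
   real (Suc i) * coeff p (Suc i) - (if i = 0 then 0 else coeff p (i - 1))
   - (if i < 2 then 0 else real (i - 1) * coeff p (i - 1))"
  by (cases i; cases "i - 1") (auto simp: L_def coeff_pderiv coeff_pCons split: nat.splits)

lemma L_add: "L (p + q) = L p + L q"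
  by (rule poly_eqI) (simp add: coeff_L algebra_simps)

lemma L_smult: "L (smult c p) = smult c (L p)"
  by (rule poly_eqI) (simp add: coeff_L algebra_simps)

lemma L_0: "L 0 = 0" by (simp add: L_def)

lemma L_sum: "L (sum f A) = (\<Sum>a\<in>A. L (f a))"
  by (induction A rule: infinite_finite_induct) (auto simp: L_add L_0)


lemma P_degree: "i > n \<Longrightarrow> coeff (P n) i = 0"
proof (induction n arbitrary: i)
  case 0 then show ?case by (simp add: P_def coeff_1)
next
  case (Suc n)
  then show ?case by (auto simp: P_Suc coeff_L)
qed

lemma P_parity: "even i \<noteq> even n \<Longrightarrow> coeff (P n) i = 0"
proof (induction n arbitrary: i)
  case 0 then show ?case by (cases i) (auto simp: P_def coeff_1)
next
  case (Suc n)
  then show ?case by (auto simp: P_Suc coeff_L)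
qed


lemma deriv_step: "deriv (\<lambda>x. sech x * poly p (tanh x)) = (\<lambda>x. sech x * poly (L p) (tanh x))"
proof
  fix x :: real
  have c: "cosh x > 0" by (simp add: cosh_real_pos)
  have "((\<lambda>x. (1 / cosh x) * poly p (tanh x)) has_real_derivative
     (- sinh x / (cosh x)^2 * poly p (tanh x) + 1 / cosh x * (poly (pderiv p) (tanh x) * (1 - tanh x ^ 2)))) (at x)"
    using c by (auto intro!: derivative_eq_intros DERIV_chain2[OF poly_DERIV] simp: power2_eq_square field_simps)
  moreover have "- sinh x / (cosh x)^2 * poly p (tanh x) + 1 / cosh x * (poly (pderiv p) (tanh x) * (1 - tanh x ^ 2))
     = sech x * poly (L p) (tanh x)"
    using c by (simp add: poly_L sech_def tanh_def power2_eq_square field_simps)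
  ultimately show "deriv (\<lambda>x. sech x * poly p (tanh x)) x = sech x * poly (L p) (tanh x)"
    by (metis (no_types, lifting) DERIV_imp_deriv sech_def ext)
qed

lemma P_deriv: "(deriv ^^ n) sech = (\<lambda>x. sech x * poly (P n) (tanh x))"
proof (induction n)
  case 0 then show ?case by (simp add: P_def)
next
  case (Suc n) then show ?case by (simp add: deriv_step P_Suc)
qed

lemma poly_tanh_zero:
  fixes R :: "real poly"
  assumes "\<And>x. poly R (tanh x) = 0"
  shows "R = 0"
proof (rule ccontr)
  assume "R \<noteq> 0"
  then have fin: "finite {t. poly R t = 0}" by (rule poly_roots_finite)
  have sub: "range tanh \<subseteq> {t. poly R t = 0}" using assms by auto
  have "finite (range (tanh :: real \<Rightarrow> real))" by (rule finite_subset[OF sub fin])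
  moreover have "inj (tanh :: real \<Rightarrow> real)" by (rule strict_mono_imp_inj_on[OF tanh_real_strict_mono])
  ultimately have "finite (UNIV :: real set)" by (rule finite_imageD)
  then show False by (simp add: infinite_UNIV_char_0)
qed


definition sig :: "nat \<Rightarrow> real" where
  "sig n = (if even n then (-1)^(n div 2) else (-1)^(n div 2 + 1))"

lemma sig_sq: "sig n * sig n = 1"
  by (simp add: sig_def flip: power_add)

definition T :: "nat \<Rightarrow> (nat \<Rightarrow> real) \<Rightarrow> real poly" where
  "T n a = (\<Sum>k\<le>n div 2. monom (sig n * (-1)^k * a k) (2*k + n mod 2))"

lemma poly_T: "poly (T n a) t = sig n * t^(n mod 2) * (\<Sum>k\<le>n div 2. (-1)^k * a k * t^(2*k))"
  by (simp add: T_def poly_sum poly_monom sum_distrib_left power_add algebra_simps)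

lemma coeff_T: "coeff (T n a) i =
   (if even i = even n \<and> i div 2 \<le> n div 2 then sig n * (-1)^(i div 2) * a (i div 2) else 0)"
proof -
  have "coeff (T n a) i = (\<Sum>k\<le>n div 2. if 2*k + n mod 2 = i then sig n * (-1)^k * a k else 0)"
    by (simp add: T_def coeff_sum coeff_monom)
  also have "\<dots> = (\<Sum>k\<le>n div 2. if k = i div 2 \<and> even i = even n then sig n * (-1)^(i div 2) * a (i div 2) else 0)"
  proof (rule sum.cong[OF refl])
    fix k
    have e: "(2*k + n mod 2 = i) \<longleftrightarrow> (k = i div 2 \<and> even i = even n)"
      by (cases "even n"; cases "even i") (auto elim!: evenE oddE, presburger+)
    show "(if 2*k + n mod 2 = i then sig n * (-1)^k * a k else 0) =
      (if k = i div 2 \<and> even i = even n then sig n * (-1)^(i div 2) * a (i div 2) else 0)"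
      by (simp only: e) (auto split: if_splits)
  qed
  also have "\<dots> = (if even i = even n \<and> i div 2 \<le> n div 2 then sig n * (-1)^(i div 2) * a (i div 2) else 0)"
    by (cases "even i = even n") (simp_all add: sum.delta)
  finally show ?thesis .
qed


lemma sgn_sq: "((-1::real)^k) * (-1)^k = 1"
  by (simp flip: power_add)

lemma T_P: "P n = T n (\<lambda>k. if k \<le> n div 2 then sig n * (-1)^k * coeff (P n) (2*k + n mod 2) else 0)"
proof (rule poly_eqI)
  fix i
  show "coeff (P n) i = coeff (T n (\<lambda>k. if k \<le> n div 2 then sig n * (-1)^k * coeff (P n) (2*k + n mod 2) else 0)) i"
  proof (cases "even i = even n \<and> i div 2 \<le> n div 2")
    case True
    then have i: "2 * (i div 2) + n mod 2 = i" by (cases "even n"; cases "even i") (auto elim!: evenE oddE)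
    have "sig n * (-1)^(i div 2) * (sig n * (-1)^(i div 2) * coeff (P n) i) =
          (sig n * sig n) * ((-1)^(i div 2) * (-1)^(i div 2)) * coeff (P n) i" by (simp only: ac_simps)
    then show ?thesis using True by (simp add: coeff_T i sig_sq sgn_sq)
  next
    case F: False
    show ?thesis
    proof (cases "even i = even n")
      case True
      with F have "i > n" by (cases "even n"; cases "even i") (auto elim!: evenE oddE)
      then have "coeff (P n) i = 0" by (rule P_degree)
      then show ?thesis using F True by (simp add: coeff_T)
    next
      case False
      then show ?thesis by (simp add: coeff_T P_parity)
    qed
  qed
qed

lemma stern_eq: "stern n k = sig n * (-1)^k * coeff (P n) (2*k + n mod 2)"
proof -
  define a0 where "a0 = (\<lambda>k. if k \<le> n div 2 then sig n * (-1)^k * coeff (P n) (2*k + n mod 2) else 0)"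
  have form: "(if even n
         then (-1)^(n div 2) * sech x * (\<Sum>k\<le>n div 2. (-1)^k * a k * tanh x ^ (2*k))
         else (-1)^(n div 2 + 1) * sech x * tanh x * (\<Sum>k\<le>n div 2. (-1)^k * a k * tanh x ^ (2*k)))
        = sech x * poly (T n a) (tanh x)" for a x
  proof (cases "even n")
    case True then show ?thesis by (simp add: poly_T sig_def)
  next
    case False
    then have m: "n mod 2 = 1" by presburger
    show ?thesis using False by (simp add: poly_T sig_def m)
  qed
  have sech_nz: "sech x \<noteq> 0" for x by (simp add: sech_def)
  have char: "(\<forall>x::real. ((deriv :: (real \<Rightarrow> real) \<Rightarrow> real \<Rightarrow> real) ^^ n) sech x =
        (if even n
         then (-1)^(n div 2) * sech x * (\<Sum>k\<le>n div 2. (-1)^k * a k * tanh x ^ (2*k))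
         else (-1)^(n div 2 + 1) * sech x * tanh x * (\<Sum>k\<le>n div 2. (-1)^k * a k * tanh x ^ (2*k))))
       \<longleftrightarrow> P n = T n a" for a
  proof
    assume h: "\<forall>x::real. ((deriv :: (real \<Rightarrow> real) \<Rightarrow> real \<Rightarrow> real) ^^ n) sech x =
        (if even n
         then (-1)^(n div 2) * sech x * (\<Sum>k\<le>n div 2. (-1)^k * a k * tanh x ^ (2*k))
         else (-1)^(n div 2 + 1) * sech x * tanh x * (\<Sum>k\<le>n div 2. (-1)^k * a k * tanh x ^ (2*k)))"
    have "poly (P n - T n a) (tanh x) = 0" for x
    proof -
      have "sech x * poly (P n) (tanh x) = sech x * poly (T n a) (tanh x)"
        using h[rule_format, of x] by (simp add: P_deriv form)
      then show ?thesis using sech_nz[of x] by simp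
    qed
    then have "P n - T n a = 0" by (rule poly_tanh_zero)
    then show "P n = T n a" by simp
  next
    assume "P n = T n a"
    then show "\<forall>x::real. ((deriv :: (real \<Rightarrow> real) \<Rightarrow> real \<Rightarrow> real) ^^ n) sech x =
        (if even n
         then (-1)^(n div 2) * sech x * (\<Sum>k\<le>n div 2. (-1)^k * a k * tanh x ^ (2*k))
         else (-1)^(n div 2 + 1) * sech x * tanh x * (\<Sum>k\<le>n div 2. (-1)^k * a k * tanh x ^ (2*k)))"
      by (simp add: P_deriv form)
  qed
  have "stern n = a0"
    unfolding stern_def
  proof (rule the_equality)
    show "(\<forall>k > n div 2. a0 k = 0) \<and> (\<forall>x::real. ((deriv :: (real \<Rightarrow> real) \<Rightarrow> real \<Rightarrow> real) ^^ n) sech x =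
        (if even n
         then (-1)^(n div 2) * sech x * (\<Sum>k\<le>n div 2. (-1)^k * a0 k * tanh x ^ (2*k))
         else (-1)^(n div 2 + 1) * sech x * tanh x * (\<Sum>k\<le>n div 2. (-1)^k * a0 k * tanh x ^ (2*k))))"
      unfolding char using T_P[of n] by (simp add: a0_def)
  next
    fix a
    assume "(\<forall>k > n div 2. a k = 0) \<and> (\<forall>x::real. ((deriv :: (real \<Rightarrow> real) \<Rightarrow> real \<Rightarrow> real) ^^ n) sech x =
        (if even n
         then (-1)^(n div 2) * sech x * (\<Sum>k\<le>n div 2. (-1)^k * a k * tanh x ^ (2*k))
         else (-1)^(n div 2 + 1) * sech x * tanh x * (\<Sum>k\<le>n div 2. (-1)^k * a k * tanh x ^ (2*k))))"
    then have z: "\<forall>k > n div 2. a k = 0" and PT: "P n = T n a" unfolding char by auto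
    show "a = a0"
    proof
      fix k
      show "a k = a0 k"
      proof (cases "k \<le> n div 2")
        case True
        have d: "(2*k + n mod 2) div 2 = k" by simp
        have e: "even (2*k + n mod 2) = even n" by (cases "even n") auto
        have "coeff (P n) (2*k + n mod 2) = sig n * (-1)^k * a k"
          using True by (simp add: PT coeff_T d e)
        then have "sig n * (-1)^k * coeff (P n) (2*k + n mod 2) = (sig n * sig n) * ((-1)^k * (-1)^k) * a k"
          by (simp only: ac_simps)
        then show ?thesis using True by (simp add: a0_def sig_sq sgn_sq)
      next
        case False
        then show ?thesis using z by (simp add: a0_def)
      qed
    qed
  qed
  then show ?thesis
    by (cases "k \<le> n div 2") (auto simp: a0_def intro!: P_degree)
qed


definition u :: "real poly" where "u = [:1,0,-1:]"

lemma u_eq: "u = monom (-1) 2 + 1"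
  by (simp add: u_def monom_altdef numeral_2_eq_2 one_pCons)

lemma u_pow: "u^r = (\<Sum>k\<le>r. monom (of_nat (r choose k) * (-1)^k) (2*k))"
  unfolding u_eq binomial_ring by (simp add: monom_power of_nat_poly smult_monom mult.commute)

lemma coeff_u_pow: "j \<le> r \<Longrightarrow> coeff (u^r) (2*j) = of_nat (r choose j) * (-1)^j"
  by (simp add: u_pow coeff_sum coeff_monom)

lemma poly_u: "poly u t = 1 - t^2"
  by (simp add: u_def power2_eq_square)

lemma poly_pderiv_u_pow: "poly (pderiv (u^r)) t = - 2 * real r * t * (1 - t^2)^(r-1)"
  by (simp add: pderiv_power poly_u u_def pderiv_pCons power2_eq_square)

lemma pow_aux: "(1 - t^2) * (1 - (t::real)^2)^(r-1) * real r = (1 - t^2)^r * real r"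
  by (cases r) auto

lemma L_u: "L (u^r) = smult (-(2*real r+1)) (pCons 0 (u^r))"
proof -
  have "poly (L (u^r)) t = poly (smult (-(2*real r+1)) (pCons 0 (u^r))) t" for t
  proof -
    have "poly (L (u^r)) t = - t * (1-t^2)^r - 2 * t * ((1 - t^2) * (1 - t^2)^(r-1) * real r)"
      by (simp add: poly_L poly_pderiv_u_pow poly_u algebra_simps)
    also have "\<dots> = poly (smult (-(2*real r+1)) (pCons 0 (u^r))) t"
      by (simp only: pow_aux) (simp add: poly_u algebra_simps)
    finally show ?thesis .
  qed
  then show ?thesis by (simp add: poly_eq_poly_eq_iff[symmetric] fun_eq_iff)
qed

lemma L_Xu: "L (pCons 0 (u^r)) = smult (-(2*real r+1)) (u^r) + smult (2*real r+2) (u^Suc r)"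
proof -
  have "poly (L (pCons 0 (u^r))) t = poly (smult (-(2*real r+1)) (u^r) + smult (2*real r+2) (u^Suc r)) t" for t
  proof -
    have "poly (L (pCons 0 (u^r))) t = - t * t * (1-t^2)^r + (1 - t^2) * (1-t^2)^r
            - 2 * t * t * ((1 - t^2) * (1 - t^2)^(r-1) * real r)"
      by (simp add: poly_L pderiv_pCons poly_pderiv_u_pow poly_u algebra_simps)
    also have "\<dots> = poly (smult (-(2*real r+1)) (u^r) + smult (2*real r+2) (u^Suc r)) t"
      by (simp only: pow_aux) (simp add: poly_u algebra_simps power2_eq_square)
    finally show ?thesis .
  qed
  then show ?thesis by (simp add: poly_eq_poly_eq_iff[symmetric] fun_eq_iff)
qed


lemma G_zero: "\<rho> > r \<Longrightarrow> G r \<rho> = 0"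
  by (induction r arbitrary: \<rho>) auto

lemma smult_sum_right: "smult c (sum f A) = (\<Sum>a\<in>A. smult c (f a))"
  by (induction A rule: infinite_finite_induct) (simp_all add: smult_add_right)

definition Q :: "nat \<Rightarrow> real poly" where
  "Q r = (\<Sum>\<rho>\<le>r. smult (of_int (G r \<rho>) * (-1)^\<rho>) (P (2*\<rho>)))"

lemma P_2Suc: "P (2 * Suc \<rho>) = L (L (P (2*\<rho>)))"
  by (simp add: P_Suc[symmetric])

lemma P_2Suc': "P (Suc (Suc (2*\<rho>))) = L (L (P (2*\<rho>)))"
  by (simp add: P_Suc)

lemma Q_Suc: "Q (Suc r) = smult ((2*real r+1)^2) (Q r) - L (L (Q r))"
proof -
  define A where "A = (\<lambda>\<rho>. smult ((2*real r+1)^2 * (of_int (G r \<rho>) * (-1)^\<rho>)) (P (2*\<rho>)))"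
  define B where "B = (\<lambda>\<rho>. smult ((if \<rho> = 0 then 0 else of_int (G r (\<rho>-1))) * (-1)^\<rho>) (P (2*\<rho>)))"
  have "Q (Suc r) = (\<Sum>\<rho>\<le>Suc r. A \<rho> + B \<rho>)"
    unfolding Q_def A_def B_def
    by (rule sum.cong) (auto simp: smult_add_left[symmetric] algebra_simps)
  also have "\<dots> = sum A {..Suc r} + sum B {..Suc r}" by (rule sum.distrib)
  also have "sum A {..Suc r} = smult ((2*real r+1)^2) (Q r)"
    by (simp add: A_def Q_def smult_sum_right G_zero)
  also have "sum B {..Suc r} = (\<Sum>\<rho>\<le>r. B (Suc \<rho>))"
    unfolding sum.atMost_Suc_shift by (simp add: B_def del: sum.atMost_Suc)
  also have "\<dots> = - L (L (Q r))"
    by (simp add: B_def Q_def L_sum L_smult P_2Suc P_2Suc' sum_negf[symmetric])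
  finally show ?thesis by simp
qed

lemma Q_closed: "Q r = smult (fact (2*r)) (u^r)"
proof (induction r)
  case 0 then show ?case by (simp add: Q_def P_def)
next
  case (Suc r)
  have "Q (Suc r) = smult ((2*real r+1)^2 * fact (2*r)) (u^r)
      - smult (fact (2*r) * (-(2*real r+1))) (smult (-(2*real r+1)) (u^r) + smult (2*real r+2) (u^Suc r))"
  proof -
    have "L (L (Q r)) = smult (fact (2*r) * (-(2*real r+1))) (L (pCons 0 (u^r)))"
      by (simp only: Suc L_smult L_u smult_smult)
    then show ?thesis by (simp only: Q_Suc Suc L_Xu smult_smult)
  qed
  also have "\<dots> = smult (fact (2 * Suc r)) (u ^ Suc r)"
    by (rule poly_eqI) (simp add: algebra_simps power2_eq_square del: power_Suc)
  finally show ?case .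
qed


lemma sgn_cancel: "(-1::real)^k * ((-1)^k * z) = z"
  by (simp add: mult.assoc[symmetric] sgn_sq)

lemma ce_even: "coeff (P (2*\<rho>)) (2 * s) = (-1)^s * ((-1)^\<rho> * stern (2*\<rho>) s)"
proof -
  have e: "stern (2*\<rho>) s = (-1)^\<rho> * ((-1)^s * coeff (P (2*\<rho>)) (2 * s))"
    by (simp add: stern_eq sig_def)
  have "(-1)^s * ((-1)^\<rho> * stern (2*\<rho>) s) = (-1)^s * ((-1)^s * coeff (P (2*\<rho>)) (2 * s))"
    by (simp only: e sgn_cancel)
  also have "\<dots> = coeff (P (2*\<rho>)) (2 * s)" by (simp only: sgn_cancel)
  finally show ?thesis by simp
qed

lemma ce_odd: "coeff (P (2*\<rho>+1)) (2 * s+1) = - ((-1)^s * ((-1)^\<rho> * stern (2*\<rho>+1) s))"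
proof -
  have e: "stern (2*\<rho>+1) s = - ((-1)^\<rho> * ((-1)^s * coeff (P (2*\<rho>+1)) (2 * s+1)))"
    by (simp add: stern_eq sig_def)
  have "- ((-1)^s * ((-1)^\<rho> * stern (2*\<rho>+1) s)) = (-1)^s * ((-1)^\<rho> * ((-1)^\<rho> * ((-1)^s * coeff (P (2*\<rho>+1)) (2 * s+1))))"
    by (simp only: e mult_minus_right minus_minus)
  also have "\<dots> = coeff (P (2*\<rho>+1)) (2 * s+1)" by (simp only: sgn_cancel)
  finally show ?thesis by simp
qed

lemma sum_even: "s \<le> r \<Longrightarrow> (\<Sum>\<rho>\<le>r. of_int (G r \<rho>) * stern (2*\<rho>) s) = fact (2*r) * of_nat (r choose s)"
proof -
  assume sr: "s \<le> r"
  have "coeff (Q r) (2 * s) = (\<Sum>\<rho>\<le>r. of_int (G r \<rho>) * (-1)^\<rho> * coeff (P (2*\<rho>)) (2 * s))"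
    by (simp add: Q_def coeff_sum)
  also have "\<dots> = (\<Sum>\<rho>\<le>r. (-1)^s * (of_int (G r \<rho>) * stern (2*\<rho>) s))"
  proof (rule sum.cong[OF refl])
    fix \<rho>
    have "of_int (G r \<rho>) * (-1)^\<rho> * coeff (P (2*\<rho>)) (2 * s) =
        (-1)^s * ((-1)^\<rho> * ((-1)^\<rho> * (of_int (G r \<rho>) * stern (2*\<rho>) s)))"
      unfolding ce_even by (simp only: ac_simps)
    then show "of_int (G r \<rho>) * (-1)^\<rho> * coeff (P (2*\<rho>)) (2 * s) = (-1)^s * (of_int (G r \<rho>) * stern (2*\<rho>) s)"
      by (simp only: sgn_cancel)
  qed
  also have "\<dots> = (-1)^s * (\<Sum>\<rho>\<le>r. of_int (G r \<rho>) * stern (2*\<rho>) s)"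
    by (simp add: sum_distrib_left)
  finally have 1: "coeff (Q r) (2 * s) = (-1)^s * (\<Sum>\<rho>\<le>r. of_int (G r \<rho>) * stern (2*\<rho>) s)" .
  have 2: "coeff (Q r) (2 * s) = (-1)^s * (fact (2*r) * of_nat (r choose s))"
    using sr by (simp add: Q_closed coeff_u_pow)
  from 1 2 show ?thesis by simp
qed

lemma sum_odd: "s \<le> r \<Longrightarrow> (\<Sum>\<rho>\<le>r. of_int (G r \<rho>) * stern (2*\<rho>+1) s) = fact (2*r+1) * of_nat (r choose s)"
proof -
  assume sr: "s \<le> r"
  have "L (Q r) = (\<Sum>\<rho>\<le>r. smult (of_int (G r \<rho>) * (-1)^\<rho>) (P (2*\<rho>+1)))"
    by (simp add: Q_def L_sum L_smult P_Suc)
  then have "coeff (L (Q r)) (2 * s+1) = (\<Sum>\<rho>\<le>r. of_int (G r \<rho>) * (-1)^\<rho> * coeff (P (2*\<rho>+1)) (2 * s+1))"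
    by (simp add: coeff_sum)
  also have "\<dots> = (\<Sum>\<rho>\<le>r. - ((-1)^s * (of_int (G r \<rho>) * stern (2*\<rho>+1) s)))"
  proof (rule sum.cong[OF refl])
    fix \<rho>
    have "of_int (G r \<rho>) * (-1)^\<rho> * coeff (P (2*\<rho>+1)) (2 * s+1) =
        - ((-1)^s * ((-1)^\<rho> * ((-1)^\<rho> * (of_int (G r \<rho>) * stern (2*\<rho>+1) s))))"
      unfolding ce_odd by (simp only: ac_simps mult_minus_right)
    then show "of_int (G r \<rho>) * (-1)^\<rho> * coeff (P (2*\<rho>+1)) (2 * s+1) = - ((-1)^s * (of_int (G r \<rho>) * stern (2*\<rho>+1) s))"
      by (simp only: sgn_cancel)
  qed
  also have "\<dots> = - ((-1)^s * (\<Sum>\<rho>\<le>r. of_int (G r \<rho>) * stern (2*\<rho>+1) s))"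
    by (simp add: sum_distrib_left sum_negf)
  finally have 1: "coeff (L (Q r)) (2 * s+1) = - ((-1)^s * (\<Sum>\<rho>\<le>r. of_int (G r \<rho>) * stern (2*\<rho>+1) s))" .
  have 2: "coeff (L (Q r)) (2 * s+1) = - ((-1)^s * (fact (2*r+1) * of_nat (r choose s)))"
  proof -
    have c: "coeff (u^r) (2 * s) = of_nat (r choose s) * (-1)^s" by (rule coeff_u_pow[OF sr])
    show ?thesis by (simp add: Q_closed L_smult L_u c) (simp add: algebra_simps)
  qed
  from 1 2 show ?thesis by simp
qed

theorem mainTheorem3:
  fixes r s :: nat
  assumes "s \<le> r"
  shows "((\<Sum>\<rho>=s..r. of_int (G r \<rho>) * stern (2*\<rho>) s) = fact (2*r) * of_nat (r choose s)) \<and>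
         ((\<Sum>\<rho>=s..r. of_int (G r \<rho>) * stern (2*\<rho>+1) s) = fact (2*r+1) * of_nat (r choose s))"
proof
  have z1: "stern (2*\<rho>) s = 0" if "\<rho> < s" for \<rho>
    using that by (simp add: stern_eq P_degree)
  have z2: "stern (Suc (2*\<rho>)) s = 0" if "\<rho> < s" for \<rho>
    using that by (simp add: stern_eq P_degree)
  have "(\<Sum>\<rho>\<le>r. of_int (G r \<rho>) * stern (2*\<rho>) s) = (\<Sum>\<rho>=s..r. of_int (G r \<rho>) * stern (2*\<rho>) s)"
    by (rule sum.mono_neutral_right) (auto simp: z1)
  then show "(\<Sum>\<rho>=s..r. of_int (G r \<rho>) * stern (2*\<rho>) s) = fact (2*r) * of_nat (r choose s)"
    using sum_even[OF assms] by simp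
  have "(\<Sum>\<rho>\<le>r. of_int (G r \<rho>) * stern (2*\<rho>+1) s) = (\<Sum>\<rho>=s..r. of_int (G r \<rho>) * stern (2*\<rho>+1) s)"
    by (rule sum.mono_neutral_right) (auto simp: z2)
  then show "(\<Sum>\<rho>=s..r. of_int (G r \<rho>) * stern (2*\<rho>+1) s) = fact (2*r+1) * of_nat (r choose s)"
    using sum_odd[OF assms] by simp
qed

end
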